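(* Let $R$ be a commutative Noetherian ring of prime characteristic $p$ and $G$ an $x$-torsion-free left $R[x,f]$-module. Let $\mathfrak{p}$ be a maximal member of $\mathcal{I}(G)\setminus\{R\}$ with respect to inclusion, and let $L=\operatorname{ann}_G(\bigoplus_{n\ge0}\mathfrak{p}x^n)$ be the corresponding special annihilator submodule of $G$ (a minimal non-zero special annihilator submodule). Then $\mathfrak{p}$ is prime, and every non-zero $g\in L$ satisfies $\operatorname{grann}_{R[x,f]}R[x,f]g=\mathfrak{p}R[x,f]$.
   Context: $R[x,f]$ is the Frobenius skew polynomial ring: free left $R$-module on $(x^i)_{i\ge0}$, $xr=r^px$; $\mathfrak{p}R[x,f]=\bigoplus_n\mathfrak{p}x^n$. $x$-torsion-free: $xg=0\Rightarrow g=0$. $\operatorname{ann}_G\mathfrak{B}$ is the set of elements of $G$ killed by $\mathfrak{B}$; special annihilator submodules are of this form for graded two-sided ideals $\mathfrak{B}$. $\operatorname{grann}N$ is the set of $\sum r_ix^i$ with each $r_ix^i$ annihilating $N$. $\mathcal{I}(G)$ is the set of ideals $\mathfrak{b}$ with $\operatorname{grann}N=\bigoplus_n\mathfrak{b}x^n$ for some $R[x,f]$-submodule $N$ of $G$. *)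

theory Defs
  imports Main "HOL.Modules" "HOL-Computational_Algebra.Primes"
begin

definition is_ideal :: "'r::comm_ring_1 set \<Rightarrow> bool" where
  "is_ideal I \<longleftrightarrow> 0 \<in> I \<and> (\<forall>a\<in>I. \<forall>b\<in>I. a + b \<in> I) \<and> (\<forall>r. \<forall>a\<in>I. r * a \<in> I)"

definition is_prime_ideal :: "'r::comm_ring_1 set \<Rightarrow> bool" where
  "is_prime_ideal P \<longleftrightarrow> is_ideal P \<and> P \<noteq> UNIV \<and> (\<forall>a b. a * b \<in> P \<longrightarrow> a \<in> P \<or> b \<in> P)"

definition noetherian_ring :: "'r::comm_ring_1 itself \<Rightarrow> bool" where
  "noetherian_ring _ \<longleftrightarrow> (\<forall>I :: nat \<Rightarrow> 'r set. (\<forall>n. is_ideal (I n)) \<and> mono I \<longrightarrow> (\<exists>m. \<forall>n\<ge>m. I n = I m))"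

text \<open>An element of R[x,f] = sum of r_i x^i is represented by its coefficient
  sequence with finite support.\<close>
definition skew_polys :: "(nat \<Rightarrow> 'r::comm_ring_1) set" where
  "skew_polys = {\<phi>. finite {n. \<phi> n \<noteq> 0}}"

definition skew_mono :: "'r::comm_ring_1 \<Rightarrow> nat \<Rightarrow> nat \<Rightarrow> 'r" where
  "skew_mono r n = (\<lambda>i. if i = n then r else 0)"

text \<open>A left R[x,f]-module is an R-module G (scalar multiplication s) together with
  an additive map xm (action of x) satisfying x (r g) = r^p (x g).\<close>
definition frob_module :: "nat \<Rightarrow> ('r::comm_ring_1 \<Rightarrow> 'g::ab_group_add \<Rightarrow> 'g) \<Rightarrow> ('g \<Rightarrow> 'g) \<Rightarrow> bool" where
  "frob_module p s xm \<longleftrightarrow> module s \<and> (\<forall>a b. xm (a + b) = xm a + xm b)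
     \<and> (\<forall>r g. xm (s r g) = s (r ^ p) (xm g))"

definition skew_act :: "('r::comm_ring_1 \<Rightarrow> 'g::ab_group_add \<Rightarrow> 'g) \<Rightarrow> ('g \<Rightarrow> 'g) \<Rightarrow> (nat \<Rightarrow> 'r) \<Rightarrow> 'g \<Rightarrow> 'g" where
  "skew_act s xm \<phi> g = (\<Sum>n\<in>{n. \<phi> n \<noteq> 0}. s (\<phi> n) ((xm ^^ n) g))"

definition x_torsion_free :: "('g::ab_group_add \<Rightarrow> 'g) \<Rightarrow> bool" where
  "x_torsion_free xm \<longleftrightarrow> (\<forall>g. xm g = 0 \<longrightarrow> g = 0)"

definition skew_submodule :: "('r::comm_ring_1 \<Rightarrow> 'g::ab_group_add \<Rightarrow> 'g) \<Rightarrow> ('g \<Rightarrow> 'g) \<Rightarrow> 'g set \<Rightarrow> bool" where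
  "skew_submodule s xm N \<longleftrightarrow> 0 \<in> N \<and> (\<forall>a\<in>N. \<forall>b\<in>N. a + b \<in> N)
     \<and> (\<forall>r. \<forall>a\<in>N. s r a \<in> N) \<and> (\<forall>a\<in>N. xm a \<in> N)"

definition skew_cyclic :: "('r::comm_ring_1 \<Rightarrow> 'g::ab_group_add \<Rightarrow> 'g) \<Rightarrow> ('g \<Rightarrow> 'g) \<Rightarrow> 'g \<Rightarrow> 'g set" where
  "skew_cyclic s xm g = {skew_act s xm \<phi> g | \<phi>. \<phi> \<in> skew_polys}"

definition grann :: "('r::comm_ring_1 \<Rightarrow> 'g::ab_group_add \<Rightarrow> 'g) \<Rightarrow> ('g \<Rightarrow> 'g) \<Rightarrow> 'g set \<Rightarrow> (nat \<Rightarrow> 'r) set" where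
  "grann s xm N = {\<phi> \<in> skew_polys. \<forall>i. \<forall>g\<in>N. skew_act s xm (skew_mono (\<phi> i) i) g = 0}"

text \<open>The graded two-sided ideal  (direct sum over n of b x^n) = b R[x,f].\<close>
definition graded_ext :: "'r::comm_ring_1 set \<Rightarrow> (nat \<Rightarrow> 'r) set" where
  "graded_ext b = {\<phi> \<in> skew_polys. \<forall>n. \<phi> n \<in> b}"

definition skew_ann :: "('r::comm_ring_1 \<Rightarrow> 'g::ab_group_add \<Rightarrow> 'g) \<Rightarrow> ('g \<Rightarrow> 'g) \<Rightarrow> (nat \<Rightarrow> 'r) set \<Rightarrow> 'g set" where
  "skew_ann s xm B = {g. \<forall>\<phi>\<in>B. skew_act s xm \<phi> g = 0}"

definition I_set :: "('r::comm_ring_1 \<Rightarrow> 'g::ab_group_add \<Rightarrow> 'g) \<Rightarrow> ('g \<Rightarrow> 'g) \<Rightarrow> 'r set set" where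
  "I_set s xm = {b. is_ideal b \<and> (\<exists>N. skew_submodule s xm N \<and> grann s xm N = graded_ext b)}"

end

theory Submission
  imports Defs
begin

lemma sum_in_closed:
  assumes "0 \<in> N" "\<forall>a\<in>N. \<forall>b\<in>N. a + b \<in> N" "\<forall>x\<in>A. f x \<in> N"
  shows "sum f A \<in> N"
proof (cases "finite A")
  case True
  then show ?thesis using assms(3)
    by (induction A rule: finite_induct) (auto simp: assms(1,2))
next
  case False
  then show ?thesis using assms(1) by simp
qed

definition annR :: "('r::comm_ring_1 \<Rightarrow> 'g::ab_group_add \<Rightarrow> 'g) \<Rightarrow> 'g set \<Rightarrow> 'r set" where
  "annR s N = {r. \<forall>h\<in>N. s r h = 0}"

definition Asub :: "('r::comm_ring_1 \<Rightarrow> 'g::ab_group_add \<Rightarrow> 'g) \<Rightarrow> ('g \<Rightarrow> 'g) \<Rightarrow> 'r set \<Rightarrow> 'g set" where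
  "Asub s xm S = {h. \<forall>r\<in>S. \<forall>n. s r ((xm ^^ n) h) = 0}"

context
  fixes s :: "'r::comm_ring_1 \<Rightarrow> 'g::ab_group_add \<Rightarrow> 'g" and xm :: "'g \<Rightarrow> 'g" and p :: nat
  assumes FM: "frob_module p s xm" and p1: "p \<ge> 1"
begin

lemma M: "module s" using FM unfolding frob_module_def by blast

lemma xadd: "xm (a + b) = xm a + xm b" using FM unfolding frob_module_def by blast

lemma xscale: "xm (s r g) = s (r ^ p) (xm g)" using FM unfolding frob_module_def by blast

lemma xzero: "xm 0 = 0"
  using xadd[of 0 0] by simp

lemma xnadd: "(xm ^^ n) (a + b) = (xm ^^ n) a + (xm ^^ n) b"
  by (induction n) (auto simp: xadd)

lemma xnzero: "(xm ^^ n) 0 = 0"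
  by (induction n) (auto simp: xzero)

lemma xnscale: "(xm ^^ n) (s r g) = s (r ^ (p ^ n)) ((xm ^^ n) g)"
proof (induction n)
  case 0 then show ?case by simp
next
  case (Suc n)
  have "(xm ^^ Suc n) (s r g) = xm (s (r ^ (p ^ n)) ((xm ^^ n) g))" using Suc by simp
  also have "\<dots> = s ((r ^ (p ^ n)) ^ p) ((xm ^^ Suc n) g)" by (simp add: xscale)
  also have "(r ^ (p ^ n)) ^ p = r ^ (p ^ Suc n)"
    by (simp add: power_mult[symmetric] mult.commute)
  finally show ?case .
qed

lemma mono_act: "skew_act s xm (skew_mono a i) g = s a ((xm ^^ i) g)"
proof (cases "a = 0")
  case True
  then show ?thesis using module.scale_zero_left[OF M]
    by (simp add: skew_act_def skew_mono_def)
next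
  case False
  then have "{n. skew_mono a i n \<noteq> 0} = {i}" by (auto simp: skew_mono_def)
  then show ?thesis by (simp add: skew_act_def skew_mono_def)
qed

lemma mono_poly: "skew_mono a i \<in> skew_polys"
proof -
  have "{n. skew_mono a i n \<noteq> 0} \<subseteq> {i}" by (auto simp: skew_mono_def)
  then have "finite {n. skew_mono a i n \<noteq> 0}" by (rule finite_subset) simp
  then show ?thesis by (simp add: skew_polys_def)
qed


lemma cancel_x:
  assumes TF: "x_torsion_free xm" and h: "s a ((xm ^^ i) g) = 0"
  shows "s a g = 0"
proof -
  have tf: "(xm ^^ n) y = 0 \<Longrightarrow> y = 0" for n y
  proof (induction n arbitrary: y)
    case 0 then show ?case by simp
  next
    case (Suc n)
    have "(xm ^^ n) (xm y) = 0" using Suc.prems by (simp only: funpow_Suc_right o_apply)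
    then have "xm y = 0" by (rule Suc.IH)
    then show ?case using TF unfolding x_torsion_free_def by blast
  qed
  have "p ^ i \<noteq> 0" using p1 by simp
  then obtain k where k: "p ^ i = Suc k" using not0_implies_Suc by blast
  have "(xm ^^ i) (s a g) = s (a ^ (p ^ i)) ((xm ^^ i) g)" by (rule xnscale)
  also have "\<dots> = s (a ^ k * a) ((xm ^^ i) g)" by (simp only: k power_Suc2)
  also have "\<dots> = s (a ^ k) (s a ((xm ^^ i) g))" by (simp only: module.scale_scale[OF M])
  also have "\<dots> = 0" using h module.scale_zero_right[OF M] by simp
  finally show ?thesis using tf by blast
qed

lemma grann_sub:
  assumes TF: "x_torsion_free xm" and N: "skew_submodule s xm N"
  shows "grann s xm N = graded_ext (annR s N)"
proof -
  have xN: "h \<in> N \<Longrightarrow> (xm ^^ i) h \<in> N" for i h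
    using N by (induction i) (auto simp: skew_submodule_def)
  have key: "(\<forall>h\<in>N. s a ((xm ^^ i) h) = 0) \<longleftrightarrow> a \<in> annR s N" for a i
  proof
    assume h: "\<forall>h\<in>N. s a ((xm ^^ i) h) = 0"
    show "a \<in> annR s N" unfolding annR_def
    proof (intro CollectI ballI)
      fix h assume "h \<in> N"
      then show "s a h = 0" using h cancel_x[OF TF] by blast
    qed
  next
    assume "a \<in> annR s N"
    then show "\<forall>h\<in>N. s a ((xm ^^ i) h) = 0" using xN unfolding annR_def by blast
  qed
  show ?thesis
    unfolding grann_def graded_ext_def mono_act by (simp add: key)
qed

lemma graded_ext_inj:
  assumes "graded_ext b = graded_ext c" "0 \<in> b" "0 \<in> c"
  shows "b = c"
proof -
  have "r \<in> b \<longleftrightarrow> r \<in> c" for r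
  proof -
    have "skew_mono r 0 \<in> graded_ext b \<longleftrightarrow> r \<in> b"
      using mono_poly[of r 0] assms(2) by (auto simp: graded_ext_def skew_mono_def)
    moreover have "skew_mono r 0 \<in> graded_ext c \<longleftrightarrow> r \<in> c"
      using mono_poly[of r 0] assms(3) by (auto simp: graded_ext_def skew_mono_def)
    ultimately show ?thesis using assms(1) by simp
  qed
  then show ?thesis by blast
qed

lemma annR_ideal: "is_ideal (annR s N)"
  unfolding is_ideal_def annR_def
  by (auto simp: module.scale_left_distrib[OF M] module.scale_scale[OF M, symmetric]
     module.scale_zero_left[OF M] module.scale_zero_right[OF M])

lemma annR_I:
  assumes TF: "x_torsion_free xm" and N: "skew_submodule s xm N"
  shows "annR s N \<in> I_set s xm"
  unfolding I_set_def using annR_ideal grann_sub[OF TF N] N by blast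

lemma annR_proper:
  assumes "h \<in> N" "h \<noteq> 0" shows "annR s N \<noteq> UNIV"
proof
  assume "annR s N = UNIV"
  then have "s 1 h = 0" using assms(1) unfolding annR_def by blast
  then show False using assms(2) module.scale_one[OF M] by simp
qed

lemma I_set_annR:
  assumes TF: "x_torsion_free xm" and "b \<in> I_set s xm"
  obtains N where "skew_submodule s xm N" "b = annR s N"
proof -
  from assms(2) obtain N where "is_ideal b" "skew_submodule s xm N" "grann s xm N = graded_ext b"
    unfolding I_set_def by blast
  moreover then have "b = annR s N"
  proof -
    have "graded_ext b = graded_ext (annR s N)" using calculation grann_sub[OF TF] by simp
    moreover have "0 \<in> b" using \<open>is_ideal b\<close> unfolding is_ideal_def by blast
    moreover have "0 \<in> annR s N" using annR_ideal unfolding is_ideal_def by blast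
    ultimately show ?thesis using graded_ext_inj by blast
  qed
  ultimately show ?thesis using that by blast
qed


lemma Asub_sub: "skew_submodule s xm (Asub s xm S)"
  unfolding skew_submodule_def Asub_def
proof (intro conjI ballI allI; clarify?)
  show "s r ((xm ^^ n) 0) = 0" for r n
    by (simp add: xnzero module.scale_zero_right[OF M])
next
  fix a b r n
  assume "\<forall>r\<in>S. \<forall>n. s r ((xm ^^ n) a) = 0" "\<forall>r\<in>S. \<forall>n. s r ((xm ^^ n) b) = 0" "r \<in> S"
  then show "s r ((xm ^^ n) (a + b)) = 0"
    by (simp add: xnadd module.scale_right_distrib[OF M])
next
  fix c a r n
  assume h: "\<forall>r\<in>S. \<forall>n. s r ((xm ^^ n) a) = 0" "r \<in> S"
  have "s r ((xm ^^ n) (s c a)) = s (c ^ (p ^ n)) (s r ((xm ^^ n) a))"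
    by (subst xnscale) (rule module.scale_left_commute[OF M])
  also have "s r ((xm ^^ n) a) = 0" using h by blast
  finally show "s r ((xm ^^ n) (s c a)) = 0" by (simp add: module.scale_zero_right[OF M])
next
  fix a r n
  assume h: "\<forall>r\<in>S. \<forall>n. s r ((xm ^^ n) a) = 0" "r \<in> S"
  have "(xm ^^ n) (xm a) = (xm ^^ Suc n) a" by (simp only: funpow_Suc_right o_apply)
  moreover have "s r ((xm ^^ Suc n) a) = 0" using h by blast
  ultimately show "s r ((xm ^^ n) (xm a)) = 0" by simp
qed

lemma act_in_sub:
  assumes N: "skew_submodule s xm N" and g: "g \<in> N"
  shows "skew_act s xm \<phi> g \<in> N"
proof -
  have xN: "h \<in> N \<Longrightarrow> (xm ^^ i) h \<in> N" for i h
    using N by (induction i) (auto simp: skew_submodule_def)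
  show ?thesis unfolding skew_act_def
    by (rule sum_in_closed) (use N g xN in \<open>auto simp: skew_submodule_def\<close>)
qed

end

theorem lemma3p8:
  fixes s :: "'r::comm_ring_1 \<Rightarrow> 'g::ab_group_add \<Rightarrow> 'g"
    and xm :: "'g \<Rightarrow> 'g" and p :: nat and P :: "'r set"
  assumes "noetherian_ring TYPE('r)"
    and "prime p" and "CHAR('r) = p"
    and "frob_module p s xm"
    and "x_torsion_free xm"
    and "P \<in> I_set s xm - {UNIV}"
    and "\<forall>b \<in> I_set s xm - {UNIV}. P \<subseteq> b \<longrightarrow> b = P"
  shows "is_prime_ideal P \<and>
    (\<forall>g \<in> skew_ann s xm (graded_ext P). g \<noteq> 0 \<longrightarrow>
        grann s xm (skew_cyclic s xm g) = graded_ext P)"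
proof -
  note FM = assms(4) and TF = assms(5) and maxP = assms(7)
  have p1: "p \<ge> 1" using assms(2) prime_gt_0_nat by (simp add: Suc_leI)
  have Mod: "module s" using M[OF FM p1] .
  have PI: "P \<in> I_set s xm" and PU: "P \<noteq> UNIV" using assms(6) by auto
  obtain N where N: "skew_submodule s xm N" and PN: "P = annR s N"
    using I_set_annR[OF FM p1 TF PI] by blast
  have idP: "is_ideal P" using annR_ideal[OF FM p1] PN by simp
  have eqP: "annR s M = P" if "skew_submodule s xm M" "P \<subseteq> annR s M" "h \<in> M" "h \<noteq> 0" for M h
  proof -
    have "annR s M \<in> I_set s xm" by (rule annR_I[OF FM p1 TF that(1)])
    moreover have "annR s M \<noteq> UNIV" by (rule annR_proper[OF FM p1 that(3,4)])
    ultimately have "annR s M \<in> I_set s xm - {UNIV}" by simp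
    then show ?thesis using maxP that(2) by simp
  qed
  have prime: "is_prime_ideal P"
    unfolding is_prime_ideal_def
  proof (intro conjI idP PU allI impI)
    fix a b assume ab: "a * b \<in> P"
    show "a \<in> P \<or> b \<in> P"
    proof (cases "a \<in> P")
      case True then show ?thesis by simp
    next
      case False
      note aP = False
      define M where "M = (s a) ` N"
      obtain q where pq: "p = Suc q" using p1 by (cases p) auto
      have xa: "xm (s a h) = s a (s (a ^ q) (xm h))" for h
      proof -
        have "xm (s a h) = s (a ^ p) (xm h)" by (rule xscale[OF FM p1])
        also have "a ^ p = a * a ^ q" by (simp add: pq)
        finally show ?thesis by (simp add: module.scale_scale[OF Mod])
      qed
      have comm: "s r (s a h) = s a (s r h)" for r h
        by (rule module.scale_left_commute[OF Mod])
      have MS: "skew_submodule s xm M"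
        unfolding skew_submodule_def
      proof (intro conjI ballI allI)
        have "s a 0 = 0" by (rule module.scale_zero_right[OF Mod])
        moreover have "(0::'g) \<in> N" using N unfolding skew_submodule_def by blast
        ultimately show "(0::'g) \<in> M" unfolding M_def by (metis image_eqI)
      next
        fix u v assume "u \<in> M" "v \<in> M"
        then obtain h1 h2 where "h1 \<in> N" "h2 \<in> N" "u = s a h1" "v = s a h2" unfolding M_def by blast
        moreover have "s a h1 + s a h2 = s a (h1 + h2)" by (simp add: module.scale_right_distrib[OF Mod])
        moreover have "h1 + h2 \<in> N" using N calculation unfolding skew_submodule_def by blast
        ultimately show "u + v \<in> M" unfolding M_def by (metis image_eqI)
      next
        fix r u assume "u \<in> M"
        then obtain h1 where "h1 \<in> N" "u = s a h1" unfolding M_def by blast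
        moreover have "s r h1 \<in> N" using N calculation unfolding skew_submodule_def by blast
        ultimately show "s r u \<in> M" unfolding M_def using comm by (metis image_eqI)
      next
        fix u assume "u \<in> M"
        then obtain h1 where "h1 \<in> N" "u = s a h1" unfolding M_def by blast
        moreover have "s (a ^ q) (xm h1) \<in> N" using N calculation unfolding skew_submodule_def by blast
        ultimately show "xm u \<in> M" unfolding M_def using xa by (metis image_eqI)
      qed
      have "a \<notin> annR s N" using aP PN by simp
      then obtain h where hN: "h \<in> N" and h0: "s a h \<noteq> 0" unfolding annR_def by blast
      have sub: "P \<subseteq> annR s M"
      proof
        fix r assume "r \<in> P"
        then have "\<forall>h\<in>N. s r h = 0" using PN unfolding annR_def by blast
        then show "r \<in> annR s M" unfolding annR_def M_def
          using comm module.scale_zero_right[OF Mod] by auto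
      qed
      have hM: "s a h \<in> M" unfolding M_def using hN by blast
      have "annR s M = P" by (rule eqP[OF MS sub hM h0])
      moreover have "b \<in> annR s M"
      proof -
        have "\<forall>h\<in>N. s (b * a) h = 0" using ab PN unfolding annR_def by (simp add: mult.commute)
        then show ?thesis unfolding annR_def M_def by (simp add: module.scale_scale[OF Mod])
      qed
      ultimately show ?thesis by simp
    qed
  qed
  have part2: "grann s xm (skew_cyclic s xm g) = graded_ext P"
    if gL: "g \<in> skew_ann s xm (graded_ext P)" and g0: "g \<noteq> 0" for g
  proof -
    have P0: "0 \<in> P" using idP unfolding is_ideal_def by blast
    have gA: "g \<in> Asub s xm P"
      unfolding Asub_def
    proof (intro CollectI ballI allI)
      fix r n assume rP: "r \<in> P"
      have "\<forall>k. skew_mono r n k \<in> P" using rP P0 by (simp add: skew_mono_def)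
      then have "skew_mono r n \<in> graded_ext P"
        using mono_poly[OF FM p1, of r n] unfolding graded_ext_def by blast
      then have "skew_act s xm (skew_mono r n) g = 0"
        using gL unfolding skew_ann_def by blast
      then show "s r ((xm ^^ n) g) = 0" by (simp add: mono_act[OF FM p1])
    qed
    define Ng where "Ng = \<Inter>{M. skew_submodule s xm M \<and> g \<in> M}"
    have memNg: "x \<in> Ng \<longleftrightarrow> (\<forall>M. skew_submodule s xm M \<and> g \<in> M \<longrightarrow> x \<in> M)" for x
      unfolding Ng_def by blast
    have NgS: "skew_submodule s xm Ng"
      unfolding skew_submodule_def
    proof (intro conjI ballI allI)
      show "0 \<in> Ng" unfolding memNg skew_submodule_def by blast
    next
      fix u v assume "u \<in> Ng" "v \<in> Ng" then show "u + v \<in> Ng"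
        unfolding memNg skew_submodule_def by blast
    next
      fix r u assume "u \<in> Ng" then show "s r u \<in> Ng"
        unfolding memNg skew_submodule_def by blast
    next
      fix u assume "u \<in> Ng" then show "xm u \<in> Ng"
        unfolding memNg skew_submodule_def by blast
    qed
    have gNg: "g \<in> Ng" unfolding memNg by blast
    have NgA: "Ng \<subseteq> Asub s xm S" if "g \<in> Asub s xm S" for S
      using memNg Asub_sub[OF FM p1, of S] that by blast
    have A0: "s r h = 0" if "h \<in> Asub s xm S" "r \<in> S" for h r S
    proof -
      have "s r ((xm ^^ 0) h) = 0" using that unfolding Asub_def by blast
      then show ?thesis by simp
    qed
    have "P \<subseteq> annR s Ng"
      using NgA[OF gA] A0 unfolding annR_def by blast
    then have annNg: "annR s Ng = P" using eqP[OF NgS _ gNg g0] by blast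
    have key: "(\<forall>c\<in>skew_cyclic s xm g. s a ((xm ^^ i) c) = 0) \<longleftrightarrow> a \<in> P" for a i
    proof
      assume H: "\<forall>c\<in>skew_cyclic s xm g. s a ((xm ^^ i) c) = 0"
      have "(xm ^^ n) g \<in> skew_cyclic s xm g" for n
      proof -
        have "skew_act s xm (skew_mono 1 n) g = (xm ^^ n) g"
          using mono_act[OF FM p1] module.scale_one[OF Mod] by simp
        then show ?thesis unfolding skew_cyclic_def using mono_poly[OF FM p1, of 1 n] by (auto intro!: exI[of _ "skew_mono 1 n"])
      qed
      then have "s a ((xm ^^ n) g) = 0" for n
        using H cancel_x[OF FM p1 TF] by blast
      then have "g \<in> Asub s xm {a}" unfolding Asub_def by blast
      then have "Ng \<subseteq> Asub s xm {a}" by (rule NgA)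
      then have "a \<in> annR s Ng" using A0 unfolding annR_def by blast
      then show "a \<in> P" using annNg by simp
    next
      assume aP: "a \<in> P"
      show "\<forall>c\<in>skew_cyclic s xm g. s a ((xm ^^ i) c) = 0"
      proof
        fix c assume "c \<in> skew_cyclic s xm g"
        then obtain \<phi> where c: "c = skew_act s xm \<phi> g" unfolding skew_cyclic_def by blast
        have "c \<in> Asub s xm P" unfolding c by (rule act_in_sub[OF FM p1 Asub_sub[OF FM p1] gA])
        then show "s a ((xm ^^ i) c) = 0" using aP unfolding Asub_def by blast
      qed
    qed
    show ?thesis
      unfolding grann_def graded_ext_def mono_act[OF FM p1] by (simp add: key)
  qed
  show ?thesis
  proof (intro conjI ballI impI)
    show "is_prime_ideal P" by (rule prime)
  next
    fix g assume "g \<in> skew_ann s xm (graded_ext P)" "g \<noteq> 0"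
    then show "grann s xm (skew_cyclic s xm g) = graded_ext P" by (rule part2)
  qed
qed

end
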